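(* Let $u>0$. Let $c(u)$ be the smallest positive solution $c$, with $0<uc<1/e$, of $uc\,T_1'(uc)-T_1(uc)=u$, and let $\alpha(u)$ be the smallest positive solution of $\alpha e^{-\alpha}=\frac{1}{(1+u)e}$. Then $$\frac{c(u)}{1+\frac1u T_1(uc(u))}=\alpha(u).$$ In particular the lower bound $\frac{c(u)}{1+\frac1u T_1(uc(u))}C(\beta)^{-1}$ on the radius of convergence of the virial expansion equals Groeneveld's bound $\alpha(u)C(\beta)^{-1}$.
   Context: $T_1(z):=z+\sum_{n\ge1}n^n\frac{z^{n+1}}{(n+1)!}$, a power series with radius of convergence $1/e$; $T_1'$ is its derivative. $C(\beta)=\int_{\mathbb R^d}|e^{-\beta\phi(x)}-1|\,dx$ for the pair potential $\phi$. *)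

theory Defs
  imports "HOL-Analysis.Analysis"
begin

text \<open>T_1(z) = z + sum_{n>=1} n^n z^(n+1)/(n+1)!  (re-indexed with n = Suc k).\<close>
definition T1 :: "real \<Rightarrow> real" where
  "T1 z = z + (\<Sum>k. real (Suc k) ^ Suc k * z ^ (k + 2) / fact (k + 2))"

definition c_of :: "real \<Rightarrow> real" where
  "c_of u = (LEAST c. 0 < c \<and> 0 < u * c \<and> u * c < exp (-1) \<and>
       u * c * deriv T1 (u * c) - T1 (u * c) = u)"

definition alpha_of :: "real \<Rightarrow> real" where
  "alpha_of u = (LEAST a. 0 < a \<and> a * exp (- a) = 1 / ((1 + u) * exp 1))"

end

theory Submission
  imports Defs
begin

definition S :: "nat \<Rightarrow> (nat \<Rightarrow> real) \<Rightarrow> real" where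
  "S n f = (\<Sum>k\<le>n. (-1)^k * real (n choose k) * f k)"

lemma S_Suc: "S (Suc n) f = S n f - S n (\<lambda>k. f (Suc k))"
proof -
  have "S (Suc n) f = f 0 + (\<Sum>k\<le>n. (-1)^(Suc k) * real (Suc n choose Suc k) * f (Suc k))"
    unfolding S_def by (subst sum.atMost_Suc_shift) simp
  also have "\<dots> = f 0 - (\<Sum>k\<le>n. (-1)^k * real (n choose k) * f (Suc k))
                   - (\<Sum>k\<le>n. (-1)^k * real (n choose Suc k) * f (Suc k))"
    by (simp add: sum_subtractf[symmetric] sum.distrib[symmetric] algebra_simps)
  also have "(\<Sum>k\<le>n. (-1)^k * real (n choose Suc k) * f (Suc k)) = f 0 - S n f"
  proof -
    have "S n f = f 0 + (\<Sum>k<n. (-1)^(Suc k) * real (n choose Suc k) * f (Suc k))"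
      unfolding S_def by (subst sum.atMost_shift) simp
    moreover have "(\<Sum>k\<le>n. (-1)^k * real (n choose Suc k) * f (Suc k)) = (\<Sum>k<n. (-1)^k * real (n choose Suc k) * f (Suc k))"
      by (simp add: lessThan_Suc_atMost[symmetric])
    ultimately show ?thesis by (simp add: sum_negf[symmetric])
  qed
  finally show ?thesis unfolding S_def by simp
qed

lemma S_sum: "S n (\<lambda>k. \<Sum>i\<in>I. g i k) = (\<Sum>i\<in>I. S n (g i))"
  unfolding S_def by (simp add: sum_distrib_left sum_distrib_right sum.swap[of _ I] mult.assoc)

lemma S_zero: "S n (\<lambda>k. 0) = 0" unfolding S_def by simp

lemma fd: "j < n \<Longrightarrow> S n (\<lambda>k. (real k + a) ^ j) = 0"
proof (induction n arbitrary: j a)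
  case 0 then show ?case by simp
next
  case (Suc n)
  have eq: "(\<lambda>k. (real k + a) ^ j - (real (Suc k) + a) ^ j) =
     (\<lambda>k. - (\<Sum>i<j. real (j choose i) * (real k + a) ^ i))"
  proof
    fix k
    have "(real (Suc k) + a) ^ j = ((real k + a) + 1) ^ j" by (simp add: algebra_simps)
    also have "\<dots> = (\<Sum>i\<le>j. real (j choose i) * (real k + a) ^ i)"
      by (subst binomial_ring) simp
    also have "\<dots> = (\<Sum>i<j. real (j choose i) * (real k + a) ^ i) + (real k + a) ^ j"
      by (simp add: lessThan_Suc_atMost[symmetric])
    finally show "(real k + a) ^ j - (real (Suc k) + a) ^ j = - (\<Sum>i<j. real (j choose i) * (real k + a) ^ i)"
      by (simp add: algebra_simps)
  qed
  have "S (Suc n) (\<lambda>k. (real k + a) ^ j) = S n (\<lambda>k. (real k + a) ^ j - (real (Suc k) + a) ^ j)"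
    by (subst S_Suc) (simp add: S_def sum_subtractf[symmetric] algebra_simps)
  also have "\<dots> = - (\<Sum>i<j. real (j choose i) * S n (\<lambda>k. (real k + a) ^ i))"
    unfolding eq by (simp add: S_def sum_negf sum_distrib_left sum_distrib_right sum.swap[of _ "{..<j}"] algebra_simps)
  also have "\<dots> = 0" using Suc by simp
  finally show ?case .
qed


lemma dterm: "((\<lambda>y. a * (y + real k) ^ k * c) has_field_derivative (a * (real k * (y + real k) ^ (k - 1)) * c)) (at y)"
  by (intro DERIV_cmult DERIV_cmult_right) (rule derivative_eq_intros refl | simp)+

definition G :: "nat \<Rightarrow> real \<Rightarrow> real" where
  "G n y = (\<Sum>k<n. real (n choose k) * (y + real k) ^ k * real (n - k) ^ (n - k - 1))"

lemma G_deriv: "((G (Suc m)) has_field_derivative (real (Suc m) * G m (y + 1))) (at y)"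
proof -
  have d: "((G (Suc m)) has_field_derivative
      (\<Sum>k<Suc m. real (Suc m choose k) * (real k * (y + real k) ^ (k - 1)) * real (Suc m - k) ^ (Suc m - k - 1))) (at y)"
    unfolding G_def[abs_def] by (rule DERIV_sum) (rule dterm)
  have "(\<Sum>k<Suc m. real (Suc m choose k) * (real k * (y + real k) ^ (k - 1)) * real (Suc m - k) ^ (Suc m - k - 1))
     = (\<Sum>k<m. real (Suc m choose Suc k) * (real (Suc k) * (y + real (Suc k)) ^ k) * real (m - k) ^ (m - k - 1))"
    by (subst sum.lessThan_Suc_shift) simp
  also have "\<dots> = (\<Sum>k<m. real (Suc m) * (real (m choose k) * ((y + 1) + real k) ^ k * real (m - k) ^ (m - k - 1)))"
  proof (rule sum.cong[OF refl])
    fix k assume "k \<in> {..<m}"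
    have h: "real (Suc m choose Suc k) * real (Suc k) = real (Suc m) * real (m choose k)"
      using Suc_times_binomial[of k m] by (metis mult.commute of_nat_mult)
    have eqp: "y + real (Suc k) = (y + 1) + real k" by simp
    then show "real (Suc m choose Suc k) * (real (Suc k) * (y + real (Suc k)) ^ k) * real (m - k) ^ (m - k - 1)
        = real (Suc m) * (real (m choose k) * ((y + 1) + real k) ^ k * real (m - k) ^ (m - k - 1))"
    proof -
      have "real (Suc m choose Suc k) * (real (Suc k) * (y + real (Suc k)) ^ k) * real (m - k) ^ (m - k - 1)
         = (real (Suc m choose Suc k) * real (Suc k)) * (((y + 1) + real k) ^ k * real (m - k) ^ (m - k - 1))"
        unfolding eqp by (simp only: mult_ac)
      also have "\<dots> = (real (Suc m) * real (m choose k)) * (((y + 1) + real k) ^ k * real (m - k) ^ (m - k - 1))"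
        unfolding h ..
      finally show ?thesis by (simp only: mult_ac)
    qed
  qed
  also have "\<dots> = real (Suc m) * G m (y + 1)"
    unfolding G_def by (simp add: sum_distrib_left)
  finally show ?thesis using d by simp
qed

lemma G_neg: assumes "N \<ge> 2" shows "G N (- real N) = 0"
proof -
  have "G N (- real N) = (\<Sum>k<N. (-1)^(N - 1) * ((-1)^k * real (N choose k) * (real k + - real N) ^ (N - 1)))"
  proof (unfold G_def, rule sum.cong[OF refl])
    fix k assume "k \<in> {..<N}"
    hence kN: "k < N" by simp
    have e1: "(- real N + real k) ^ k = (-1)^k * real (N - k) ^ k"
      using kN by (simp add: of_nat_diff power_mult_distrib[symmetric])
    have e2: "(real k + - real N) ^ (N - 1) = (-1)^(N-1) * real (N - k) ^ (N - 1)"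
      using kN by (simp add: of_nat_diff power_mult_distrib[symmetric])
    have e3: "real (N - k) ^ k * real (N - k) ^ (N - k - 1) = real (N - k) ^ (N - 1)"
      using kN by (simp add: power_add[symmetric])
    have e4: "((-1::real)^(N-1)) * (-1)^(N-1) = 1"
      by (simp add: power_add[symmetric] flip: power_mult_distrib)
    show "real (N choose k) * (- real N + real k) ^ k * real (N - k) ^ (N - k - 1) =
        (- 1) ^ (N - 1) * ((- 1) ^ k * real (N choose k) * (real k + - real N) ^ (N - 1))"
    proof -
      have "(- 1) ^ (N - 1) * ((- 1) ^ k * real (N choose k) * ((-1)^(N-1) * (real (N - k) ^ k * real (N - k) ^ (N - k - 1))))
          = ((-1::real) ^ (N - 1) * (-1)^(N-1)) * (real (N choose k) * ((- 1) ^ k * real (N - k) ^ k) * real (N - k) ^ (N - k - 1))"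
        by (simp only: mult_ac)
      then show ?thesis unfolding e1 e2 e3[symmetric] e4 by simp
    qed
  qed
  also have "\<dots> = (-1)^(N-1) * S N (\<lambda>k. (real k + - real N) ^ (N - 1))"
    unfolding S_def using assms
    by (simp add: sum_distrib_left lessThan_Suc_atMost[symmetric] power_0_left)
  also have "\<dots> = 0" using fd[of "N - 1" N "- real N"] assms by simp
  finally show ?thesis .
qed

lemma G_eq: "G (Suc n) y = real (Suc n) * (y + real (Suc n)) ^ n"
proof (induction n arbitrary: y)
  case 0 then show ?case by (simp add: G_def)
next
  case (Suc n)
  define F where "F y = G (Suc (Suc n)) y - real (Suc (Suc n)) * (y + real (Suc (Suc n))) ^ Suc n" for y
  have "(F has_field_derivative 0) (at y)" for y
  proof -
    have "(F has_field_derivative (real (Suc (Suc n)) * G (Suc n) (y + 1)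
        - real (Suc (Suc n)) * (real (Suc n) * (y + real (Suc (Suc n))) ^ n))) (at y)"
      unfolding F_def[abs_def]
      by (rule derivative_eq_intros G_deriv refl | simp)+
    moreover have "G (Suc n) (y + 1) = real (Suc n) * (y + real (Suc (Suc n))) ^ n"
      using Suc.IH[of "y+1"] by (simp add: algebra_simps)
    ultimately show ?thesis by simp
  qed
  hence "F y = F (- real (Suc (Suc n)))" by (intro DERIV_isconst_all) auto
  also have "\<dots> = 0" unfolding F_def using G_neg[of "Suc (Suc n)"] by simp
  finally show ?case unfolding F_def by simp
qed

definition bb :: "nat \<Rightarrow> real" where "bb n = real n ^ n / fact n"
definition tt :: "nat \<Rightarrow> real" where "tt n = (if n = 0 then 0 else real n ^ (n - 1) / fact n)"
definition cc :: "nat \<Rightarrow> real" where "cc n = (case n of 0 \<Rightarrow> 0 | Suc m \<Rightarrow> bb m / real (Suc m))"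
definition BB :: "real \<Rightarrow> real" where "BB x = (\<Sum>n. bb n * x ^ n)"
definition TT :: "real \<Rightarrow> real" where "TT x = (\<Sum>n. tt n * x ^ n)"

lemma bb_nonneg: "0 \<le> bb n" unfolding bb_def by simp
lemma tt_nonneg: "0 \<le> tt n" unfolding tt_def by simp
lemma tt_le_bb: "tt n \<le> bb n"
proof (cases "n = 0")
  case True then show ?thesis by (simp add: tt_def bb_def)
next
  case False
  have "real n ^ (n-1) \<le> real n ^ n" by (rule power_increasing) (use False in auto)
  then show ?thesis using False unfolding tt_def bb_def by (simp add: divide_right_mono)
qed

lemma pow_bound: "real (Suc n) ^ n \<le> exp 1 * real n ^ n"
proof (cases "n = 0")
  case True then show ?thesis by simp
next
  case False
  hence np: "real n > 0" by simp
  have "real (Suc n) = real n * (1 + 1 / real n)" using np by (simp add: field_simps)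
  hence "real (Suc n) ^ n = real n ^ n * (1 + 1 / real n) ^ n" by (simp add: power_mult_distrib)
  also have "(1 + 1 / real n) ^ n \<le> exp (1 / real n) ^ n"
    by (rule power_mono) (use np in auto)
  also have "exp (1 / real n) ^ n = exp 1"
    using np by (simp add: exp_of_nat_mult[symmetric])
  finally show ?thesis using np by (simp add: mult.commute mult_left_mono)
qed

lemma bb_Suc_le: "bb (Suc n) \<le> exp 1 * bb n"
proof -
  have "bb (Suc n) = real (Suc n) ^ n / fact n"
    unfolding bb_def by (simp add: fact_Suc field_simps del: of_nat_Suc)
  also have "\<dots> \<le> exp 1 * real n ^ n / fact n"
    by (rule divide_right_mono[OF pow_bound]) simp
  finally show ?thesis unfolding bb_def by simp
qed

lemma summable_bb: assumes "0 \<le> K" "K < exp (-1)" shows "summable (\<lambda>n. bb n * K ^ n)"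
proof (rule summable_ratio_test[where c = "exp 1 * K" and N = 0])
  have "exp 1 * K < exp 1 * exp (-1)" using assms by simp
  then show "exp 1 * K < 1" by (simp add: exp_minus)
  fix n :: nat
  have "bb (Suc n) * K ^ Suc n \<le> (exp 1 * bb n) * K ^ Suc n"
    by (rule mult_right_mono[OF bb_Suc_le]) (use assms in simp)
  then show "norm (bb (Suc n) * K ^ Suc n) \<le> exp 1 * K * norm (bb n * K ^ n)"
    using assms bb_nonneg[of n] bb_nonneg[of "Suc n"] by (simp add: mult_ac)
qed

lemma summable_bb_norm: "\<bar>x\<bar> < exp (-1) \<Longrightarrow> summable (\<lambda>n. norm (bb n * x ^ n))"
  using summable_bb[of "\<bar>x\<bar>"] by (simp add: abs_mult power_abs abs_of_nonneg bb_nonneg)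

lemma summable_tt_norm: assumes "\<bar>x\<bar> < exp (-1)" shows "summable (\<lambda>n. norm (tt n * x ^ n))"
  by (rule summable_comparison_test[OF _ summable_bb_norm[OF assms]], intro exI[of _ 0] allI impI)
     (simp add: abs_mult tt_nonneg bb_nonneg mult_right_mono tt_le_bb)

lemma summable_cc_norm: assumes "\<bar>x\<bar> < exp (-1)" shows "summable (\<lambda>n. norm (cc n * x ^ n))"
proof -
  have "summable (\<lambda>n. norm (cc (Suc n) * x ^ (Suc n)))"
  proof (rule summable_comparison_test[OF _ summable_mult[OF summable_bb_norm[OF assms], of "\<bar>x\<bar>"]])
    show "\<exists>N. \<forall>n\<ge>N. norm (norm (cc (Suc n) * x ^ Suc n)) \<le> \<bar>x\<bar> * norm (bb n * x ^ n)"
    proof (intro exI allI impI)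
      fix n :: nat
      have hle: "bb n / real (Suc n) \<le> bb n" using bb_nonneg[of n]
        by (simp add: divide_le_eq mult_le_cancel_left1 del: of_nat_Suc)
      have "norm (norm (cc (Suc n) * x ^ Suc n)) = (bb n / real (Suc n)) * (\<bar>x\<bar> ^ Suc n)"
        by (simp add: cc_def abs_mult power_abs bb_nonneg del: of_nat_Suc)
      also have "\<dots> \<le> bb n * \<bar>x\<bar> ^ Suc n" using hle by (intro mult_right_mono) simp_all
      also have "\<dots> = \<bar>x\<bar> * norm (bb n * x ^ n)" by (simp add: abs_mult power_abs bb_nonneg)
      finally show "norm (norm (cc (Suc n) * x ^ Suc n)) \<le> \<bar>x\<bar> * norm (bb n * x ^ n)" .
    qed
  qed
  then show ?thesis by (subst (asm) summable_Suc_iff)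
qed

lemma open_R: "open {z::real. \<bar>z\<bar> < exp (-1)}"
  by (rule open_Collect_less) (intro continuous_intros)+

lemma summable_bb': "\<bar>x\<bar> < exp (-1) \<Longrightarrow> summable (\<lambda>n. bb n * x ^ n)"
  by (rule summable_norm_cancel[OF summable_bb_norm])
lemma summable_tt': "\<bar>x\<bar> < exp (-1) \<Longrightarrow> summable (\<lambda>n. tt n * x ^ n)"
  by (rule summable_norm_cancel[OF summable_tt_norm])
lemma summable_cc': "\<bar>x\<bar> < exp (-1) \<Longrightarrow> summable (\<lambda>n. cc n * x ^ n)"
  by (rule summable_norm_cancel[OF summable_cc_norm])

lemma T1_eq: assumes "\<bar>z\<bar> < exp (-1)" shows "T1 z = (\<Sum>n. cc n * z ^ n)"
proof -
  define f where "f n = cc n * z ^ n" for n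
  have sf: "summable f" unfolding f_def using summable_cc'[OF assms] .
  have f0: "f 0 = 0" by (simp add: f_def cc_def)
  have s1: "(\<Sum>n. f (Suc n)) = (\<Sum>n. f n)" using suminf_split_head[OF sf] f0 by simp
  have sg: "summable (\<lambda>n. f (Suc n))" using sf by (subst summable_Suc_iff)
  have f1: "f (Suc 0) = z" by (simp add: f_def cc_def bb_def)
  have s2: "(\<Sum>n. f (Suc (Suc n))) = (\<Sum>n. f (Suc n)) - z"
    using suminf_split_head[OF sg] f1 by simp
  have "f (Suc (Suc k)) = real (Suc k) ^ Suc k * z ^ (k + 2) / fact (k + 2)" for k
    by (simp add: f_def cc_def bb_def fact_Suc field_simps del: of_nat_Suc)
  hence "(\<Sum>k. real (Suc k) ^ Suc k * z ^ (k + 2) / fact (k + 2)) = (\<Sum>n. f (Suc (Suc n)))" by simp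
  hence "T1 z = z + (\<Sum>n. f (Suc (Suc n)))" unfolding T1_def by simp
  also have "\<dots> = (\<Sum>n. f n)" using s1 s2 by simp
  also have "(\<Sum>n. f n) = (\<Sum>n. cc n * z ^ n)" unfolding f_def ..
  finally show ?thesis .
qed

lemma diffs_cc: "diffs cc = bb"
  by (rule ext) (simp add: diffs_def cc_def del: of_nat_Suc)

lemma diffs_tt: "diffs tt n = bb (Suc n)"
  by (simp add: diffs_def tt_def bb_def fact_Suc field_simps del: of_nat_Suc)

lemma DERIV_T1: assumes "\<bar>x\<bar> < exp (-1)" shows "(T1 has_field_derivative BB x) (at x)"
proof -
  have "((\<lambda>z. \<Sum>n. cc n * z ^ n) has_field_derivative (\<Sum>n. diffs cc n * x ^ n)) (at x)"
    by (rule termdiffs_strong'[where K = "exp (-1)"]) (use assms summable_cc' in auto)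
  hence "((\<lambda>z. \<Sum>n. cc n * z ^ n) has_field_derivative BB x) (at x)"
    by (simp add: diffs_cc BB_def)
  then show ?thesis
    by (rule has_field_derivative_transform_within_open[OF _ open_R]) (use assms T1_eq in auto)
qed

definition TD :: "real \<Rightarrow> real" where "TD x = (\<Sum>n. bb (Suc n) * x ^ n)"

lemma DERIV_TT: assumes "\<bar>x\<bar> < exp (-1)" shows "(TT has_field_derivative TD x) (at x)"
proof -
  have "((\<lambda>z. \<Sum>n. tt n * z ^ n) has_field_derivative (\<Sum>n. diffs tt n * x ^ n)) (at x)"
    by (rule termdiffs_strong'[where K = "exp (-1)"]) (use assms summable_tt' in auto)
  then show ?thesis by (simp add: diffs_tt TD_def TT_def[abs_def])
qed

lemma TD_eq: assumes "\<bar>x\<bar> < exp (-1)" shows "x * TD x = BB x - 1"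
proof -
  have s: "summable (\<lambda>n. bb n * x ^ n)" using summable_bb'[OF assms] .
  have "x * TD x = (\<Sum>n. bb (Suc n) * x ^ Suc n)"
  proof (cases "x = 0")
    case True then show ?thesis by (simp add: TD_def)
  next
    case False
    have s1: "summable (\<lambda>n. bb (Suc n) * x ^ Suc n)" using s by (subst summable_Suc_iff)
    have "summable (\<lambda>n. (bb (Suc n) * x ^ Suc n) / x)" using summable_divide[OF s1] .
    hence s2: "summable (\<lambda>n. bb (Suc n) * x ^ n)" using False by simp
    have "x * TD x = (\<Sum>n. x * (bb (Suc n) * x ^ n))" unfolding TD_def by (rule suminf_mult[OF s2, symmetric])
    also have "\<dots> = (\<Sum>n. bb (Suc n) * x ^ Suc n)" by (simp add: algebra_simps)
    finally show ?thesis .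
  qed
  also have "\<dots> = BB x - 1" using suminf_split_head[OF s] by (simp add: BB_def bb_def)
  finally show ?thesis .
qed

lemma abel: assumes "k \<ge> 1" shows "(\<Sum>i\<le>k. bb i * tt (k - i)) = bb k"
proof -
  have "(\<Sum>i\<le>k. bb i * tt (k - i)) = (\<Sum>i<k. bb i * tt (k - i))"
  proof -
    have "(\<Sum>i\<le>k. bb i * tt (k - i)) = (\<Sum>i<k. bb i * tt (k - i)) + bb k * tt (k - k)"
      by (simp add: lessThan_Suc_atMost[symmetric])
    then show ?thesis by (simp add: tt_def)
  qed
  also have "\<dots> = (\<Sum>i<k. real (k choose i) * (0 + real i) ^ i * real (k - i) ^ (k - i - 1)) / fact k"
    unfolding sum_divide_distrib
  proof (rule sum.cong[OF refl])
    fix i assume "i \<in> {..<k}"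
    hence ik: "i < k" by simp
    show "bb i * tt (k - i) = real (k choose i) * (0 + real i) ^ i * real (k - i) ^ (k - i - 1) / fact k"
    proof -
      have C: "real (k choose i) = fact k / (fact i * fact (k - i))" by (rule binomial_fact) (use ik in simp)
      have "tt (k - i) = real (k - i) ^ (k - i - 1) / fact (k - i)" using ik by (simp add: tt_def)
      then show ?thesis unfolding C bb_def by simp
    qed
  qed
  also have "\<dots> = G k 0 / fact k" by (simp add: G_def)
  also have "G k 0 = real k ^ k"
    using G_eq[of "k - 1" 0] assms by (cases k) (simp_all)
  finally show ?thesis by (simp add: bb_def)
qed

lemma BT: assumes "\<bar>x\<bar> < exp (-1)" shows "BB x * (1 - TT x) = 1"
proof -
  define a where "a n = bb n * x ^ n" for n
  define s where "s n = ((if n = 0 then 1 else 0) - tt n) * x ^ n" for n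
  have sa: "summable (\<lambda>n. norm (a n))" unfolding a_def using summable_bb_norm[OF assms] .
  have ss: "summable (\<lambda>n. norm (s n))"
  proof (rule summable_comparison_test[OF _ summable_add[OF summable_single[of 0 "\<lambda>_. 1::real"] summable_tt_norm[OF assms]]])
    show "\<exists>N. \<forall>n\<ge>N. norm (norm (s n)) \<le> (if n = 0 then 1 else 0) + norm (tt n * x ^ n)"
      by (intro exI[of _ 0] allI impI) (auto simp: s_def tt_def)
  qed
  have h1: "(\<lambda>n. (if n = 0 then 1 else 0) * x ^ n) sums 1"
  proof -
    have "(\<lambda>n. (if n = 0 then 1 else 0) * x ^ n) = (\<lambda>r. if r = 0 then x ^ r else 0)" by (rule ext) simp
    then show ?thesis using sums_single[of 0 "\<lambda>r. x ^ r"] by simp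
  qed
  have h2: "(\<lambda>n. tt n * x ^ n) sums TT x" unfolding TT_def by (rule summable_sums[OF summable_tt'[OF assms]])
  have "(\<lambda>n. (if n = 0 then 1 else 0) * x ^ n - tt n * x ^ n) sums (1 - TT x)" by (rule sums_diff[OF h1 h2])
  moreover have "(\<lambda>n. (if n = 0 then 1 else 0) * x ^ n - tt n * x ^ n) = s" by (rule ext) (simp add: s_def algebra_simps)
  ultimately have s1: "(\<Sum>n. s n) = 1 - TT x" by (simp add: sums_iff)
  have "BB x * (1 - TT x) = (\<Sum>k. \<Sum>i\<le>k. a i * s (k - i))"
    unfolding s1[symmetric] BB_def a_def[symmetric] by (rule Cauchy_product[OF sa ss])
  also have "\<dots> = (\<Sum>k. if k = 0 then 1 else 0)"
  proof (rule suminf_cong)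
    fix k :: nat
    have "(\<Sum>i\<le>k. a i * s (k - i)) = x ^ k * ((\<Sum>i\<le>k. bb i * (if k - i = 0 then 1 else 0)) - (\<Sum>i\<le>k. bb i * tt (k - i)))"
    proof -
      have "(\<Sum>i\<le>k. a i * s (k - i)) = (\<Sum>i\<le>k. x ^ k * (bb i * (if k - i = 0 then 1 else 0) - bb i * tt (k - i)))"
      proof (rule sum.cong[OF refl])
        fix i assume "i \<in> {..k}"
        hence e: "x ^ i * x ^ (k - i) = x ^ k" by (simp add: power_add[symmetric])
        have "a i * s (k - i) = (x ^ i * x ^ (k - i)) * (bb i * ((if k - i = 0 then 1 else 0) - tt (k - i)))"
          unfolding a_def s_def by (simp only: mult_ac)
        then show "a i * s (k - i) = x ^ k * (bb i * (if k - i = 0 then 1 else 0) - bb i * tt (k - i))"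
          unfolding e by (simp add: right_diff_distrib)
      qed
      then show ?thesis by (simp add: sum_distrib_left[symmetric] sum_subtractf)
    qed
    also have "(\<Sum>i\<le>k. bb i * (if k - i = 0 then 1 else 0)) = bb k"
    proof -
      have "(\<Sum>i\<le>k. bb i * (if k - i = 0 then 1 else 0)) = (\<Sum>i\<le>k. if i = k then bb i else 0)"
        by (rule sum.cong) auto
      then show ?thesis by simp
    qed
    finally show "(\<Sum>i\<le>k. a i * s (k - i)) = (if k = 0 then 1 else 0)"
      using abel[of k] by (cases "k = 0") (simp_all add: bb_def tt_def)
  qed
  also have "\<dots> = 1" using sums_single[of 0 "\<lambda>_. 1::real"] by (simp add: sums_iff)
  finally show ?thesis .
qed

lemma BB_pos: assumes "0 \<le> x" "x < exp (-1)" shows "0 < BB x"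
  unfolding BB_def
  by (rule suminf_pos2[where i = 0]) (use assms summable_bb'[of x] in \<open>auto simp: bb_nonneg bb_def\<close>)

lemma TT_pos: assumes "0 < x" "x < exp (-1)" shows "0 < TT x"
  unfolding TT_def
  by (rule suminf_pos2[where i = 1]) (use assms summable_tt'[of x] in \<open>auto simp: tt_nonneg tt_def\<close>)

lemma TT_lt1: assumes "0 \<le> x" "x < exp (-1)" shows "TT x < 1"
proof -
  have "BB x * (1 - TT x) = 1" using BT[of x] assms by simp
  with BB_pos[OF assms] show ?thesis by (metis diff_gt_0_iff_gt zero_less_mult_pos zero_less_one)
qed

lemma TT0: "TT 0 = 0" unfolding TT_def using powser_zero[of tt] by (simp add: tt_def)
lemma TD0: "TD 0 = 1" unfolding TD_def using powser_zero[of "\<lambda>n. bb (Suc n)"] by (simp add: bb_def)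
lemma T1_0: "T1 0 = 0" unfolding T1_def by simp

lemma absR: "0 \<le> (x::real) \<Longrightarrow> x < exp (-1) \<Longrightarrow> \<bar>x\<bar> < exp (-1)" by simp

lemma E_eq: assumes "0 \<le> x" "x < exp (-1)" shows "TT x * exp (- TT x) = x"
proof (cases "x = 0")
  case True then show ?thesis by (simp add: TT0)
next
  case False
  hence xp: "0 < x" using assms by simp
  define h where "h y = TT y * exp (- TT y) - y" for y
  define h' where "h' y = TD y * exp (- TT y) * (1 - TT y) - 1" for y
  have dh: "(h has_field_derivative h' y) (at y)" if "\<bar>y\<bar> < exp (-1)" for y
  proof -
    have dT: "(TT has_field_derivative TD y) (at y)" by (rule DERIV_TT[OF that])
    have de: "((\<lambda>z. exp (- TT z)) has_field_derivative exp (- TT y) * (- TD y)) (at y)"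
      by (rule DERIV_chain2[OF DERIV_exp DERIV_minus[OF dT]])
    have "(h has_field_derivative (TD y * exp (- TT y) + exp (- TT y) * (- TD y) * TT y - 1)) (at y)"
      unfolding h_def[abs_def] by (rule DERIV_diff[OF DERIV_mult[OF dT de] DERIV_ident])
    moreover have "TD y * exp (- TT y) + exp (- TT y) * (- TD y) * TT y - 1 = h' y"
      unfolding h'_def by (simp add: algebra_simps)
    ultimately show ?thesis by simp
  qed
  have hh: "y * h' y = h y" if "\<bar>y\<bar> < exp (-1)" for y
  proof -
    have "y * h' y = (y * TD y) * (1 - TT y) * exp (- TT y) - y" unfolding h'_def by (simp add: algebra_simps)
    also have "\<dots> = (BB y - 1) * (1 - TT y) * exp (- TT y) - y" using TD_eq[OF that] by simp
    also have "(BB y - 1) * (1 - TT y) = TT y" using BT[OF that] by (simp add: algebra_simps)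
    finally show ?thesis unfolding h_def by simp
  qed
  define k where "k y = h y / y" for y
  have dk: "(k has_field_derivative 0) (at y)" if "0 < y" "y < exp (-1)" for y
  proof -
    have ay: "\<bar>y\<bar> < exp (-1)" using that by simp
    have "(k has_field_derivative (h' y * y - h y * 1) / (y * y)) (at y)"
      unfolding k_def[abs_def]
      by (rule DERIV_divide[OF dh[OF ay] DERIV_ident]) (use that in simp)
    moreover have "h' y * y - h y * 1 = 0" using hh[OF ay] by (simp add: mult.commute)
    ultimately show ?thesis by simp
  qed
  have kconst: "k y = k x" if "0 < y" "y < x" for y
  proof -
    have "k x = k y"
    proof (rule DERIV_isconst_end[OF that(2)])
      show "continuous_on {y..x} k"
        by (rule continuous_at_imp_continuous_on)
           (use that assms in \<open>auto intro!: DERIV_isCont[OF dk]\<close>)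
      show "\<And>t. y < t \<Longrightarrow> t < x \<Longrightarrow> (k has_field_derivative 0) (at t)"
        using that assms by (intro dk) auto
    qed
    then show ?thesis by simp
  qed
  have h00: "h 0 = 0" unfolding h_def by (simp add: TT0)
  have h'0: "h' 0 = 0" unfolding h'_def by (simp add: TT0 TD0)
  have "((\<lambda>t. (h (0 + t) - h 0) / t) \<longlongrightarrow> h' 0) (at 0)"
    using DERIV_D[OF dh[of 0]] by simp
  hence "(k \<longlongrightarrow> 0) (at 0)" unfolding k_def[abs_def] using h00 h'0 by simp
  hence "(k \<longlongrightarrow> 0) (at_right 0)" by (rule tendsto_mono[OF at_le, rotated]) simp
  moreover have "eventually (\<lambda>t. k t = k x) (at_right 0)"
    using eventually_at_right_real[OF xp] by eventually_elim (auto intro: kconst)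
  ultimately have "((\<lambda>t. k x) \<longlongrightarrow> 0) (at_right (0::real))"
    by (rule Lim_transform_eventually)
  hence "k x = 0" by (simp add: tendsto_const_iff)
  hence "h x = 0" unfolding k_def using xp by simp
  then show ?thesis unfolding h_def by simp
qed

lemma T1_closed: assumes "0 \<le> x" "x < exp (-1)" shows "T1 x = 1 - exp (- TT x)"
proof (cases "x = 0")
  case True then show ?thesis by (simp add: T1_0 TT0)
next
  case False
  hence xp: "0 < x" using assms by simp
  define m where "m y = T1 y - (1 - exp (- TT y))" for y
  have dm: "(m has_field_derivative (BB y - (0 - exp (- TT y) * (- TD y)))) (at y)" if "\<bar>y\<bar> < exp (-1)" for y
  proof -
    have dT: "(TT has_field_derivative TD y) (at y)" by (rule DERIV_TT[OF that])
    have de: "((\<lambda>z. exp (- TT z)) has_field_derivative exp (- TT y) * (- TD y)) (at y)"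
      by (rule DERIV_chain2[OF DERIV_exp DERIV_minus[OF dT]])
    show ?thesis unfolding m_def[abs_def]
      by (rule DERIV_diff[OF DERIV_T1[OF that] DERIV_diff[OF DERIV_const de]])
  qed
  have z: "BB y - (0 - exp (- TT y) * (- TD y)) = 0" if "0 < y" "y < exp (-1)" for y
  proof -
    have ay: "\<bar>y\<bar> < exp (-1)" using that by simp
    have Tp: "0 < TT y" using TT_pos[OF that] .
    have e: "TT y * exp (- TT y) = y" using E_eq[of y] that by simp
    have "exp (- TT y) * TD y * TT y = y * TD y" using e by (simp add: algebra_simps)
    also have "\<dots> = BB y - 1" using TD_eq[OF ay] .
    also have "\<dots> = BB y * TT y" using BT[OF ay] by (simp add: algebra_simps)
    finally have "exp (- TT y) * TD y = BB y" using Tp by simp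
    then show ?thesis by simp
  qed
  have "m x = m 0"
  proof (rule DERIV_isconst_end[OF xp])
    show "continuous_on {0..x} m"
      by (rule continuous_at_imp_continuous_on) (use assms in \<open>auto intro!: DERIV_isCont[OF dm]\<close>)
    show "\<And>t. 0 < t \<Longrightarrow> t < x \<Longrightarrow> (m has_field_derivative 0) (at t)"
    proof -
      fix t :: real assume "0 < t" "t < x"
      hence "0 < t" "t < exp (-1)" using assms by auto
      then show "(m has_field_derivative 0) (at t)" using dm[of t] z[of t] by simp
    qed
  qed
  also have "m 0 = 0" unfolding m_def by (simp add: T1_0 TT0)
  finally show ?thesis unfolding m_def by simp
qed

lemma g_strict: assumes "0 \<le> (a::real)" "a < b" "b \<le> 1" shows "a * exp (- a) < b * exp (- b)"
proof (rule DERIV_pos_imp_increasing_open[OF assms(2)])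
  fix t :: real assume t: "a < t" "t < b"
  have "((\<lambda>x. x * exp (- x)) has_field_derivative (1 * exp (- t) + exp (- t) * (- 1) * t)) (at t)"
    by (rule DERIV_mult[OF DERIV_ident DERIV_chain2[OF DERIV_exp DERIV_minus[OF DERIV_ident]]])
  moreover have "1 * exp (- t) + exp (- t) * (- 1) * t > 0"
  proof -
    have "1 * exp (- t) + exp (- t) * (- 1) * t = (1 - t) * exp (- t)" by (simp add: algebra_simps)
    moreover have "1 - t > 0" using t assms by simp
    ultimately show ?thesis by simp
  qed
  ultimately show "\<exists>y. ((\<lambda>x. x * exp (- x)) has_field_derivative y) (at t) \<and> 0 < y" by blast
next
  show "continuous_on {a..b} (\<lambda>x. x * exp (- x))" by (intro continuous_intros)
qed

lemma psi_strict: assumes "(u::real) > 0" "0 \<le> a" "a < b"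
  shows "exp (- a) - (1 + u) * (1 - a) < exp (- b) - (1 + u) * (1 - b)"
proof (rule DERIV_pos_imp_increasing[OF assms(3)])
  fix t :: real assume t: "a \<le> t" "t \<le> b"
  have "((\<lambda>x. exp (- x) - (1 + u) * (1 - x)) has_field_derivative (exp (- t) * (- 1) - (1 + u) * (0 - 1))) (at t)"
    by (rule DERIV_diff[OF DERIV_chain2[OF DERIV_exp DERIV_minus[OF DERIV_ident]] DERIV_cmult[OF DERIV_diff[OF DERIV_const DERIV_ident]]])
  moreover have "exp (- t) * (- 1) - (1 + u) * (0 - 1) > 0"
  proof -
    have "exp (- t) \<le> 1" using t assms by simp
    then have "exp (- t) < 1 + u" using assms by linarith
    then show ?thesis by (simp add: algebra_simps)
  qed
  ultimately show "\<exists>y. ((\<lambda>x. exp (- x) - (1 + u) * (1 - x)) has_field_derivative y) (at t) \<and> 0 < y" by blast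
qed

lemma g_inj: assumes "0 \<le> (a::real)" "a \<le> 1" "0 \<le> b" "b \<le> 1" "a * exp (- a) = b * exp (- b)"
  shows "a = b"
proof (rule ccontr)
  assume "a \<noteq> b"
  then consider "a < b" | "b < a" by linarith
  then show False
  proof cases
    case 1 then show False using g_strict[of a b] assms by simp
  next
    case 2 then show False using g_strict[of b a] assms by simp
  qed
qed

lemma cond_eq: assumes "0 < z" "z < exp (-1)"
  shows "z * deriv T1 z - T1 z = exp (- TT z) / (1 - TT z) - 1"
proof -
  have az: "\<bar>z\<bar> < exp (-1)" using assms by simp
  have d: "deriv T1 z = BB z" by (rule DERIV_imp_deriv[OF DERIV_T1[OF az]])
  have lt: "TT z < 1" using TT_lt1[of z] assms by simp
  have B: "BB z = 1 / (1 - TT z)" using BT[OF az] lt by (simp add: field_simps)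
  have T1z: "T1 z = 1 - exp (- TT z)" using T1_closed[of z] assms by simp
  have e: "z = TT z * exp (- TT z)" using E_eq[of z] assms by simp
  have "z * deriv T1 z - T1 z = TT z * exp (- TT z) / (1 - TT z) - (1 - exp (- TT z))"
    unfolding d B T1z by (subst (1) e) simp
  also have "\<dots> = exp (- TT z) / (1 - TT z) - 1"
    using lt by (simp add: field_simps)
  finally show ?thesis .
qed

theorem proposition5p3:
  fixes u :: real
  assumes "u > 0"
  shows "c_of u / (1 + T1 (u * c_of u) / u) = alpha_of u"
proof -
  define \<psi> where "\<psi> t = exp (- t) - (1 + u) * (1 - t)" for t
  have "\<exists>t. 0 \<le> t \<and> t \<le> 1 \<and> \<psi> t = 0"
  proof (rule IVT')
    show "\<psi> 0 \<le> 0" unfolding \<psi>_def using assms by simp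
    show "0 \<le> \<psi> 1" unfolding \<psi>_def by simp
    show "continuous_on {0..1} \<psi>" unfolding \<psi>_def[abs_def] by (intro continuous_intros)
  qed simp
  then obtain s where s: "0 \<le> s" "s \<le> 1" "\<psi> s = 0" by blast
  have "s \<noteq> 0" using s assms unfolding \<psi>_def by auto
  moreover have "s \<noteq> 1" using s unfolding \<psi>_def by auto
  ultimately have s01: "0 < s" "s < 1" using s by auto
  have psi_inj: "t = s" if "0 \<le> t" "\<psi> t = 0" for t
  proof (rule ccontr)
    assume "t \<noteq> s"
    then consider "t < s" | "s < t" by linarith
    then show False
    proof cases
      case 1 then show False using psi_strict[OF assms that(1) 1] s that unfolding \<psi>_def by simp
    next
      case 2 then show False using psi_strict[OF assms s(1) 2] s that unfolding \<psi>_def by simp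
    qed
  qed
  define E where "E = exp (- s)"
  have Epos: "E > 0" unfolding E_def by simp
  have Eeq: "E = (1 + u) * (1 - s)" using s(3) unfolding \<psi>_def E_def by simp
  define z0 where "z0 = s * E"
  have z0pos: "0 < z0" unfolding z0_def using s01 Epos by simp
  have z0lt: "z0 < exp (-1)" unfolding z0_def E_def using g_strict[of s 1] s01 by simp
  have Tz0: "TT z0 = s"
  proof (rule g_inj)
    show "0 \<le> TT z0" using TT_pos[OF z0pos z0lt] by simp
    show "TT z0 \<le> 1" using TT_lt1[of z0] z0pos z0lt by simp
    show "TT z0 * exp (- TT z0) = s * exp (- s)" using E_eq[of z0] z0pos z0lt unfolding z0_def E_def by simp
  qed (use s in auto)
  define c0 where "c0 = z0 / u"
  have uc0: "u * c0 = z0" unfolding c0_def using assms by simp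
  define P where "P c \<longleftrightarrow> 0 < c \<and> 0 < u * c \<and> u * c < exp (-1) \<and> u * c * deriv T1 (u * c) - T1 (u * c) = u" for c
  have key: "z * deriv T1 z - T1 z = u \<longleftrightarrow> \<psi> (TT z) = 0" if "0 < z" "z < exp (-1)" for z
  proof -
    have lt: "TT z < 1" using TT_lt1[of z] that by simp
    have "z * deriv T1 z - T1 z = u \<longleftrightarrow> exp (- TT z) / (1 - TT z) = 1 + u"
      unfolding cond_eq[OF that] by auto
    also have "\<dots> \<longleftrightarrow> exp (- TT z) = (1 + u) * (1 - TT z)"
      using lt by (simp add: field_simps)
    also have "\<dots> \<longleftrightarrow> \<psi> (TT z) = 0" unfolding \<psi>_def by simp
    finally show ?thesis .
  qed
  have Pc0: "P c0"
    unfolding P_def uc0 using z0pos z0lt assms key[OF z0pos z0lt] Tz0 s(3)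
    by (simp add: c0_def)
  have uniq: "c = c0" if "P c" for c
  proof -
    have zp: "0 < u * c" and zl: "u * c < exp (-1)" and cd: "u * c * deriv T1 (u * c) - T1 (u * c) = u"
      using that unfolding P_def by auto
    have "\<psi> (TT (u * c)) = 0" using key[OF zp zl] cd by simp
    hence "TT (u * c) = s" using psi_inj TT_pos[OF zp zl] by simp
    hence "u * c = z0" using E_eq[of "u * c"] zp zl unfolding z0_def E_def by simp
    hence "u * c = u * c0" using uc0 by simp
    then show ?thesis using assms by simp
  qed
  have L1: "(LEAST c. P c) = c0"
    by (rule Least_equality) (rule Pc0, drule uniq, simp)
  have cof: "c_of u = c0" using L1 by (simp only: c_of_def P_def)
  define a0 where "a0 = 1 - s"
  define Q where "Q a \<longleftrightarrow> 0 < a \<and> a * exp (- a) = 1 / ((1 + u) * exp 1)" for a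
  have Qa0: "Q a0"
  proof -
    have "exp (- a0) = exp (- 1) / E" unfolding a0_def E_def by (simp add: exp_diff exp_minus field_simps)
    hence "a0 * exp (- a0) = (1 - s) / (E * exp 1)" unfolding a0_def by (simp add: exp_minus field_simps)
    also have "\<dots> = 1 / ((1 + u) * exp 1)"
    proof -
      have ne: "1 - s \<noteq> 0" using s01 by simp
      have "(1 - s) / (((1 + u) * (1 - s)) * exp 1) = (1 - s) / ((1 - s) * ((1 + u) * exp 1))"
        by (simp only: mult_ac)
      also have "\<dots> = 1 / ((1 + u) * exp 1)" using ne by simp
      finally show ?thesis unfolding Eeq .
    qed
    finally show ?thesis unfolding Q_def a0_def using s01 by simp
  qed
  have amin: "a0 \<le> a" if "Q a" for a
  proof (rule ccontr)
    assume "\<not> a0 \<le> a"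
    hence "a < a0" by simp
    moreover have "0 \<le> a" using that unfolding Q_def by simp
    ultimately have "a * exp (- a) < a0 * exp (- a0)" using g_strict[of a a0] s01 unfolding a0_def by simp
    then show False using that Qa0 unfolding Q_def by simp
  qed
  have L2: "(LEAST a. Q a) = a0"
    by (rule Least_equality) (rule Qa0, rule amin)
  have aof: "alpha_of u = a0" using L2 by (simp only: alpha_of_def Q_def)
  have T1z0: "T1 z0 = 1 - E" using T1_closed[of z0] z0pos z0lt Tz0 unfolding E_def by simp
  have "c0 / (1 + T1 (u * c0) / u) = a0"
  proof -
    have "1 + T1 (u * c0) / u = ((1 + u) * s) / u"
      unfolding uc0 T1z0 using assms by (simp add: Eeq field_simps)
    hence "c0 / (1 + T1 (u * c0) / u) = (z0 / u) / (((1 + u) * s) / u)" unfolding c0_def by simp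
    also have "\<dots> = z0 / ((1 + u) * s)" using assms s01 by (simp add: field_simps)
    also have "\<dots> = (s * E) / (s * (1 + u))" unfolding z0_def by (simp only: mult_ac)
    also have "\<dots> = E / (1 + u)" using s01 by simp
    also have "\<dots> = 1 - s" unfolding Eeq using assms by simp
    finally show ?thesis unfolding a0_def .
  qed
  then show ?thesis using cof aof by simp
qed

end
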